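(* Let $\mathcal{Q}$ be the exponential family of Gaussian distributions on $\mathbb{R}^d$ with diagonal covariance $\operatorname{diag}(\sigma^2)$, $\sigma^2\in\mathbb{R}^d_{>0}$, with expectation parameter $\omega=(\mu,\sigma^2+\mu\bullet\mu)$, and let $C=\{(\mu,\sigma^2+\mu\bullet\mu)\in\mathbb{R}^d\times\mathbb{R}^d:\mu\in\mathbb{R}^d_{\ge0}\}$. For $\omega=(\mu,\sigma^2+\mu\bullet\mu)$ with $\sigma^2\in\mathbb{R}^d_{>0}$, $\mathrm{proj}^{A^*}_C(\omega)=(\mu_P,\sigma^2+\mu_P\bullet\mu_P)$ where $(\mu_P)_i=\max(0,\mu_i)$ for $i=1,\dots,d$.
   Context: $\bullet$ denotes the entrywise (Hadamard) product. This family is an exponential family with sufficient statistic $\Gamma(x)=(x,x\bullet x)$, natural parameter $\theta=(\mu/\sigma^2,-\frac{1}{2\sigma^2})$ (entrywise), log-partition $A(\theta)=-\frac14\sum_i(\theta_1)_i^2/(\theta_2)_i-\frac12\sum_i\log(-2(\theta_2)_i)$, and expectation parameter $\omega=\nabla A(\theta)=(\mu,\sigma^2+\mu\bullet\mu)$; $A^*$ is the convex conjugate of $A$. $\mathrm{proj}^{A^*}_C(\omega)=\arg\min_{\omega'\in C}\{A^*(\omega')-A^*(\omega)-\langle\nabla A^*(\omega),\omega'-\omega\rangle\}$. *)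

theory Defs
  imports "HOL-Analysis.Analysis"
begin

text \<open>Diagonal Gaussian family on R^d; the dimension d is the finite index type 'd.
  Parameters live in (real^'d) \<times> (real^'d), with the product inner product.\<close>

definition hadamard :: "real^'d \<Rightarrow> real^'d \<Rightarrow> real^'d" (infixl "\<bullet>\<^sub>H" 70) where
  "x \<bullet>\<^sub>H y = (\<chi> i. x $ i * y $ i)"

definition nat_dom :: "((real^'d) \<times> (real^'d)) set" where
  "nat_dom = {\<theta>. \<forall>i. snd \<theta> $ i < 0}"

definition logpart :: "(real^'d) \<times> (real^'d) \<Rightarrow> real" where
  "logpart \<theta> = - (1/4) * (\<Sum>i\<in>UNIV. (fst \<theta> $ i)^2 / (snd \<theta> $ i))
                 - (1/2) * (\<Sum>i\<in>UNIV. ln (-2 * snd \<theta> $ i))"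

text \<open>Convex conjugate A* (A is +\<infinity> outside its domain), extended-real valued.\<close>
definition Astar :: "(real^'d) \<times> (real^'d) \<Rightarrow> ereal" where
  "Astar \<omega> = (SUP \<theta>\<in>nat_dom. ereal (\<theta> \<bullet> \<omega> - logpart \<theta>))"

text \<open>Gradient of A* at \<omega> (of its real-valued version; meaningful where A* is finite and
  differentiable).\<close>
definition grad_Astar :: "(real^'d) \<times> (real^'d) \<Rightarrow> (real^'d) \<times> (real^'d)" where
  "grad_Astar \<omega> = (THE g. ((\<lambda>w. real_of_ereal (Astar w)) has_derivative (\<lambda>h. g \<bullet> h)) (at \<omega>))"

definition bregman_Astar :: "(real^'d) \<times> (real^'d) \<Rightarrow> (real^'d) \<times> (real^'d) \<Rightarrow> real" where
  "bregman_Astar \<omega>' \<omega> = real_of_ereal (Astar \<omega>') - real_of_ereal (Astar \<omega>)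
      - grad_Astar \<omega> \<bullet> (\<omega>' - \<omega>)"

text \<open>Expectation parameter of N(mu, diag(s)).\<close>
definition exp_param :: "real^'d \<Rightarrow> real^'d \<Rightarrow> (real^'d) \<times> (real^'d)" where
  "exp_param \<mu> s = (\<mu>, s + \<mu> \<bullet>\<^sub>H \<mu>)"

definition Cset :: "((real^'d) \<times> (real^'d)) set" where
  "Cset = {exp_param \<mu> s | \<mu> s. (\<forall>i. 0 \<le> \<mu> $ i) \<and> (\<forall>i. 0 < s $ i)}"

definition is_proj_Astar :: "((real^'d) \<times> (real^'d)) set \<Rightarrow> (real^'d) \<times> (real^'d)
    \<Rightarrow> (real^'d) \<times> (real^'d) \<Rightarrow> bool" where
  "is_proj_Astar S \<omega> p \<longleftrightarrow> p \<in> S \<and> (\<forall>w\<in>S. bregman_Astar p \<omega> \<le> bregman_Astar w \<omega>)"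

end

theory Submission
  imports Defs
begin

definition sv :: "(real^'d) \<times> (real^'d) \<Rightarrow> 'd \<Rightarrow> real" where
  "sv \<omega> i = snd \<omega> $ i - fst \<omega> $ i * fst \<omega> $ i"

definition Fv :: "(real^'d) \<times> (real^'d) \<Rightarrow> real" where
  "Fv \<omega> = (\<Sum>i\<in>UNIV. - 1/2 - ln (sv \<omega> i) / 2)"

definition Dom :: "((real^'d) \<times> (real^'d)) set" where
  "Dom = {\<omega>. \<forall>i. 0 < sv \<omega> i}"

definition gr :: "(real^'d) \<times> (real^'d) \<Rightarrow> (real^'d) \<times> (real^'d)" where
  "gr \<omega> = ((\<chi> i. fst \<omega> $ i / sv \<omega> i), (\<chi> i. - 1 / (2 * sv \<omega> i)))"

lemma coord_ub:
  fixes a b m v :: real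
  assumes b: "b < 0" and s: "0 < v - m * m"
  shows "a * m + b * v + a^2 / (4 * b) + ln (-2 * b) / 2 \<le> - 1/2 - ln (v - m * m) / 2"
proof -
  have e: "a * m + a^2 / (4 * b) + b * m * m = (a + 2 * b * m)^2 / (4 * b)"
    using b by (simp add: field_simps power2_eq_square)
  have "(a + 2 * b * m)^2 / (4 * b) \<le> 0"
    using b by (simp add: divide_nonneg_neg)
  hence h1: "a * m + a^2 / (4 * b) + b * m * m \<le> 0" using e by simp
  have "ln (-2 * b) + ln (v - m * m) = ln ((-2 * b) * (v - m * m))"
    by (rule ln_mult_pos[symmetric]) (use b s in auto)
  also have "\<dots> \<le> (-2 * b) * (v - m * m) - 1"
    using b s by (intro ln_le_minus_one) (simp add: mult_neg_pos)
  finally have h2: "ln (-2 * b) + ln (v - m * m) \<le> (-2 * b) * (v - m * m) - 1" .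
  show ?thesis using h1 h2 by (simp add: algebra_simps)
qed

lemma coord_eq:
  fixes S v m :: real
  assumes S: "0 < S" and v: "v = S + m * m"
  shows "(m / S) * m + (- 1 / (2 * S)) * v + (m / S)^2 / (4 * (- 1 / (2 * S)))
         + ln (- 2 * (- 1 / (2 * S))) / 2 = - 1/2 - ln S / 2"
proof -
  have "- 2 * (- 1 / (2 * S)) = inverse S" using S by (simp add: field_simps)
  hence l: "ln (- 2 * (- 1 / (2 * S))) = - ln S" using S by (simp add: ln_inverse)
  have "(m / S) * m + (- 1 / (2 * S)) * v + (m / S)^2 / (4 * (- 1 / (2 * S))) = - 1/2"
    using S unfolding v by (simp add: field_simps power2_eq_square)
  thus ?thesis using l by linarith
qed

lemma obj_expand:
  "\<theta> \<bullet> \<omega> - logpart \<theta> = (\<Sum>i\<in>UNIV. fst \<theta> $ i * fst \<omega> $ i + snd \<theta> $ i * snd \<omega> $ i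
      + (fst \<theta> $ i)^2 / (4 * snd \<theta> $ i) + ln (-2 * snd \<theta> $ i) / 2)"
  by (simp add: inner_prod_def inner_vec_def logpart_def sum.distrib sum_distrib_left
      sum_divide_distrib sum_negf algebra_simps)

lemma Astar_Dom:
  assumes "\<omega> \<in> Dom"
  shows "Astar \<omega> = ereal (Fv \<omega>)"
proof -
  have s: "\<And>i. 0 < sv \<omega> i" using assms by (simp add: Dom_def)
  have ub: "\<theta> \<bullet> \<omega> - logpart \<theta> \<le> Fv \<omega>" if "\<theta> \<in> nat_dom" for \<theta>
    unfolding obj_expand Fv_def
    by (rule sum_mono, unfold sv_def, rule coord_ub)
       (use that s in \<open>auto simp: nat_dom_def sv_def\<close>)
  define t where "t = gr \<omega>"
  have tin: "t \<in> nat_dom" using s by (simp add: t_def gr_def nat_dom_def)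
  have eq: "t \<bullet> \<omega> - logpart t = Fv \<omega>"
    unfolding obj_expand Fv_def
  proof (rule sum.cong[OF refl])
    fix i
    have si: "0 < sv \<omega> i" by (rule s)
    show "fst t $ i * fst \<omega> $ i + snd t $ i * snd \<omega> $ i + (fst t $ i)\<^sup>2 / (4 * snd t $ i) +
          ln (- 2 * snd t $ i) / 2 = - 1 / 2 - ln (sv \<omega> i) / 2"
      unfolding t_def gr_def using coord_eq[OF si, of "snd \<omega> $ i" "fst \<omega> $ i"]
      by (simp add: sv_def)
  qed
  show ?thesis unfolding Astar_def
  proof (rule antisym)
    show "(SUP \<theta>\<in>nat_dom. ereal (\<theta> \<bullet> \<omega> - logpart \<theta>)) \<le> ereal (Fv \<omega>)"
      by (rule SUP_least) (use ub in simp)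
    show "ereal (Fv \<omega>) \<le> (SUP \<theta>\<in>nat_dom. ereal (\<theta> \<bullet> \<omega> - logpart \<theta>))"
      using SUP_upper[OF tin, of "\<lambda>\<theta>. ereal (\<theta> \<bullet> \<omega> - logpart \<theta>)"] eq by simp
  qed
qed

lemma open_Dom: "open (Dom :: ((real^'d) \<times> (real^'d)) set)"
proof -
  have eq: "Dom = (\<Inter>i\<in>UNIV. {\<omega>. 0 < sv \<omega> i})" by (auto simp: Dom_def)
  have op: "open {\<omega>::(real^'d) \<times> (real^'d). 0 < sv \<omega> i}" for i
    unfolding sv_def by (intro open_Collect_less continuous_intros)
  show ?thesis unfolding eq by (rule open_INT) (simp_all add: op)
qed

lemma aux_e:
  fixes S m a b :: real
  assumes "0 < S"
  shows "0 - (1/2) * (inverse S * (b - (m * a + a * m))) = m / S * a + (- 1 / (2 * S)) * b"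
  using assms by (simp add: field_simps)

lemma Fv_deriv:
  fixes \<omega> :: "(real^'d) \<times> (real^'d)"
  assumes "\<omega> \<in> Dom"
  shows "(Fv has_derivative (\<lambda>h. gr \<omega> \<bullet> h)) (at \<omega>)"
proof -
  have s: "\<And>i. 0 < sv \<omega> i" using assms by (simp add: Dom_def)
  have vf: "((\<lambda>x::(real^'d) \<times> (real^'d). fst x $ i) has_derivative (\<lambda>h. fst h $ i)) F" for i F
    by (rule bounded_linear.has_derivative[OF bounded_linear_vec_nth has_derivative_fst[OF has_derivative_ident]])
  have vs: "((\<lambda>x::(real^'d) \<times> (real^'d). snd x $ i) has_derivative (\<lambda>h. snd h $ i)) F" for i F
    by (rule bounded_linear.has_derivative[OF bounded_linear_vec_nth has_derivative_snd[OF has_derivative_ident]])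
  have gi: "((\<lambda>x. sv x i) has_derivative (\<lambda>h. snd h $ i - (fst \<omega> $ i * fst h $ i + fst h $ i * fst \<omega> $ i))) (at \<omega>)" for i
    unfolding sv_def by (rule has_derivative_diff[OF vs has_derivative_mult[OF vf vf]])
  have li: "(ln has_derivative (\<lambda>h. inverse (sv \<omega> i) * h)) (at (sv \<omega> i))" for i
    using DERIV_ln[OF s[of i]] by (simp add: has_field_derivative_def)
  have ci: "((\<lambda>x. ln (sv x i)) has_derivative (\<lambda>h. inverse (sv \<omega> i) * (snd h $ i - (fst \<omega> $ i * fst h $ i + fst h $ i * fst \<omega> $ i)))) (at \<omega>)" for i
    by (rule has_derivative_compose[OF gi li])
  have ti: "((\<lambda>x. - 1/2 - (1/2) * ln (sv x i)) has_derivative (\<lambda>h. 0 - (1/2) * (inverse (sv \<omega> i) * (snd h $ i - (fst \<omega> $ i * fst h $ i + fst h $ i * fst \<omega> $ i))))) (at \<omega>)" for i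
    by (rule has_derivative_diff[OF has_derivative_const has_derivative_mult_right[OF ci]]) 
  have su: "(Fv has_derivative (\<lambda>h. \<Sum>i\<in>UNIV. 0 - (1/2) * (inverse (sv \<omega> i) * (snd h $ i - (fst \<omega> $ i * fst h $ i + fst h $ i * fst \<omega> $ i))))) (at \<omega>)"
  proof -
    have "Fv = (\<lambda>x. \<Sum>i\<in>UNIV. - 1/2 - (1/2) * ln (sv x i))"
      by (simp add: Fv_def fun_eq_iff)
    show ?thesis unfolding \<open>Fv = _\<close> by (rule has_derivative_sum) (rule ti)
  qed
  show ?thesis
  proof (rule has_derivative_eq_rhs[OF su], rule ext)
    fix h :: "(real^'d) \<times> (real^'d)"
    show "(\<Sum>i\<in>UNIV. 0 - (1/2) * (inverse (sv \<omega> i) * (snd h $ i - (fst \<omega> $ i * fst h $ i + fst h $ i * fst \<omega> $ i)))) = gr \<omega> \<bullet> h"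
    proof -
      have e: "0 - (1/2) * (inverse (sv \<omega> i) * (snd h $ i - (fst \<omega> $ i * fst h $ i + fst h $ i * fst \<omega> $ i)))
         = (fst \<omega> $ i / sv \<omega> i) \<bullet> fst h $ i + (- 1 / (2 * sv \<omega> i)) \<bullet> snd h $ i" for i
        unfolding inner_real_def by (rule aux_e[OF s[of i]])
      have g: "gr \<omega> \<bullet> h = (\<Sum>i\<in>UNIV. (fst \<omega> $ i / sv \<omega> i) \<bullet> fst h $ i) + (\<Sum>i\<in>UNIV. (- 1 / (2 * sv \<omega> i)) \<bullet> snd h $ i)"
        unfolding gr_def inner_prod_def inner_vec_def fst_conv snd_conv vec_lambda_beta by (rule refl)
      show ?thesis unfolding e g by (simp only: sum.distrib)
    qed
  qed
qed

lemma grad_Dom: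
  fixes \<omega> :: "(real^'d) \<times> (real^'d)"
  assumes "\<omega> \<in> Dom"
  shows "grad_Astar \<omega> = gr \<omega>"
proof -
  have D: "((\<lambda>w. real_of_ereal (Astar w)) has_derivative (\<lambda>h. gr \<omega> \<bullet> h)) (at \<omega>)"
    by (rule has_derivative_transform_within_open[OF Fv_deriv[OF assms] open_Dom assms])
       (simp add: Astar_Dom)
  show ?thesis unfolding grad_Astar_def
  proof (rule the_equality)
    show "((\<lambda>w. real_of_ereal (Astar w)) has_derivative (\<lambda>h. gr \<omega> \<bullet> h)) (at \<omega>)" by (rule D)
    fix g
    assume "((\<lambda>w. real_of_ereal (Astar w)) has_derivative (\<lambda>h. g \<bullet> h)) (at \<omega>)"
    from has_derivative_unique[OF this D] have "\<And>h. g \<bullet> h = gr \<omega> \<bullet> h" by metis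
    hence "(g - gr \<omega>) \<bullet> (g - gr \<omega>) = 0" by (simp add: inner_diff_left)
    thus "g = gr \<omega>" by simp
  qed
qed

lemma sv_exp: "sv (exp_param \<mu> s) i = s $ i"
  by (simp add: sv_def exp_param_def hadamard_def)

lemma exp_Dom: "\<forall>i. 0 < s $ i \<Longrightarrow> exp_param \<mu> s \<in> Dom"
  by (simp add: Dom_def sv_exp)

definition K :: "real \<Rightarrow> real \<Rightarrow> real \<Rightarrow> real \<Rightarrow> real" where
  "K s m s' m' = (ln s - ln s') / 2 + (s' - s) / (2 * s) + (m' - m)^2 / (2 * s)"

lemma K_alg:
  fixes s m s' m' :: real
  assumes "0 < s"
  shows "(- 1/2 - ln s' / 2) - (- 1/2 - ln s / 2) - ((m / s) * (m' - m) + (- 1 / (2 * s)) * ((s' + m' * m') - (s + m * m)))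
     = K s m s' m'"
  using assms by (simp add: K_def field_simps power2_eq_square)

lemma bregman_exp:
  fixes \<mu> s \<mu>' s' :: "real^'d"
  assumes s: "\<forall>i. 0 < s $ i" and s': "\<forall>i. 0 < s' $ i"
  shows "bregman_Astar (exp_param \<mu>' s') (exp_param \<mu> s) = (\<Sum>i\<in>UNIV. K (s $ i) (\<mu> $ i) (s' $ i) (\<mu>' $ i))"
proof -
  let ?w = "exp_param \<mu> s" and ?w' = "exp_param \<mu>' s'"
  have b: "bregman_Astar ?w' ?w = Fv ?w' - Fv ?w - gr ?w \<bullet> (?w' - ?w)"
    by (simp add: bregman_Astar_def Astar_Dom[OF exp_Dom[OF s]] Astar_Dom[OF exp_Dom[OF s']] grad_Dom[OF exp_Dom[OF s]])
  have f1: "Fv ?w' = (\<Sum>i\<in>UNIV. - 1/2 - ln (s' $ i) / 2)" by (simp add: Fv_def sv_exp)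
  have f2: "Fv ?w = (\<Sum>i\<in>UNIV. - 1/2 - ln (s $ i) / 2)" by (simp add: Fv_def sv_exp)
  have g: "gr ?w \<bullet> (?w' - ?w) = (\<Sum>i\<in>UNIV. (\<mu> $ i / s $ i) * (\<mu>' $ i - \<mu> $ i) + (- 1 / (2 * s $ i)) * ((s' $ i + \<mu>' $ i * \<mu>' $ i) - (s $ i + \<mu> $ i * \<mu> $ i)))"
    unfolding sum.distrib
    by (simp add: gr_def sv_def inner_prod_def inner_vec_def exp_param_def hadamard_def)
  have "bregman_Astar ?w' ?w = (\<Sum>i\<in>UNIV. (- 1/2 - ln (s' $ i) / 2) - (- 1/2 - ln (s $ i) / 2) - ((\<mu> $ i / s $ i) * (\<mu>' $ i - \<mu> $ i) + (- 1 / (2 * s $ i)) * ((s' $ i + \<mu>' $ i * \<mu>' $ i) - (s $ i + \<mu> $ i * \<mu> $ i))))"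
    unfolding b f1 f2 g by (simp only: sum_subtractf)
  also have "\<dots> = (\<Sum>i\<in>UNIV. K (s $ i) (\<mu> $ i) (s' $ i) (\<mu>' $ i))"
    by (rule sum.cong[OF refl]) (rule K_alg, use s in auto)
  finally show ?thesis .
qed

lemma K_min:
  fixes s m s' m' :: real
  assumes s: "0 < s" and s': "0 < s'" and m': "0 \<le> m'"
  shows "K s m s (max 0 m) \<le> K s m s' m'"
    and "K s m s' m' = K s m s (max 0 m) \<Longrightarrow> s' = s \<and> m' = max 0 m"
proof -
  have k0: "K s m s (max 0 m) = (max 0 m - m)^2 / (2 * s)" by (simp add: K_def)
  have L: "0 \<le> (ln s - ln s') / 2 + (s' - s) / (2 * s)"
    using ln_diff_le[OF s' s] s by (simp add: field_simps)
  have sq: "(max 0 m - m)^2 \<le> (m' - m)^2"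
  proof (cases "0 \<le> m")
    case True thus ?thesis by simp
  next
    case False
    hence "- m \<le> m' - m" "0 \<le> - m" using m' by auto
    hence "(- m)^2 \<le> (m' - m)^2" by (intro power_mono) auto
    thus ?thesis using False by simp
  qed
  hence Q: "(max 0 m - m)^2 / (2 * s) \<le> (m' - m)^2 / (2 * s)"
    using s by (intro divide_right_mono) auto
  show "K s m s (max 0 m) \<le> K s m s' m'" using k0 L Q by (simp add: K_def)
  assume eq: "K s m s' m' = K s m s (max 0 m)"
  have eq': "(ln s - ln s') / 2 + (s' - s) / (2 * s) + (m' - m)^2 / (2 * s) = (max 0 m - m)^2 / (2 * s)"
    using eq k0 by (simp add: K_def)
  have L0: "(ln s - ln s') / 2 + (s' - s) / (2 * s) = 0" using eq' L Q by linarith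
  have Q0: "(m' - m)^2 / (2 * s) = (max 0 m - m)^2 / (2 * s)" using eq' L Q by linarith
  have "ln (s' / s) = s' / s - 1"
  proof -
    have "ln (s' / s) = ln s' - ln s" using s s' by (simp add: ln_div)
    moreover have "s' / s - 1 = (s' - s) / s" using s by (simp add: field_simps)
    moreover have "ln s' - ln s = (s' - s) / s" using L0 s by (simp add: field_simps)
    ultimately show ?thesis by simp
  qed
  hence "s' / s = 1" by (rule ln_eq_minus_one[rotated]) (use s s' in simp)
  hence "s' = s" using s by simp
  moreover have "m' = max 0 m"
  proof -
    have sq0: "(m' - m)^2 = (max 0 m - m)^2" using Q0 s by simp
    show ?thesis
    proof (cases "0 \<le> m")
      case True thus ?thesis using sq0 by simp
    next
      case False
      hence "0 \<le> m' - m" "0 \<le> - m" using m' by auto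
      moreover have "(m' - m)^2 = (- m)^2" using sq0 False by simp
      ultimately have "m' - m = - m" using power2_eq_iff_nonneg by blast
      thus ?thesis using False by simp
    qed
  qed
  ultimately show "s' = s \<and> m' = max 0 m" by simp
qed

theorem proposition15:
  fixes \<mu> s :: "real^'d"
  assumes "\<forall>i. 0 < s $ i"
  shows "is_proj_Astar Cset (exp_param \<mu> s) (exp_param (\<chi> i. max 0 (\<mu> $ i)) s)
       \<and> (\<forall>p. is_proj_Astar Cset (exp_param \<mu> s) p \<longrightarrow> p = exp_param (\<chi> i. max 0 (\<mu> $ i)) s)"
proof -
  let ?mP = "(\<chi> i. max 0 (\<mu> $ i)) :: real^'d"
  let ?P0 = "exp_param ?mP s"
  let ?w = "exp_param \<mu> s"
  have s: "\<forall>i. 0 < s $ i" by (rule assms)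
  have P0C: "?P0 \<in> Cset" unfolding Cset_def using s by (intro CollectI exI[of _ ?mP] exI[of _ s]) auto
  have b0: "bregman_Astar ?P0 ?w = (\<Sum>i\<in>UNIV. K (s $ i) (\<mu> $ i) (s $ i) (max 0 (\<mu> $ i)))"
    using bregman_exp[OF s s, of ?mP \<mu>] by simp
  have bw: "bregman_Astar (exp_param \<mu>' s') ?w = (\<Sum>i\<in>UNIV. K (s $ i) (\<mu> $ i) (s' $ i) (\<mu>' $ i))"
    if "\<forall>i. 0 < s' $ i" for \<mu>' s' :: "real^'d"
    by (rule bregman_exp[OF s that])
  have le: "bregman_Astar ?P0 ?w \<le> bregman_Astar (exp_param \<mu>' s') ?w"
    if "\<forall>i. 0 \<le> \<mu>' $ i" "\<forall>i. 0 < s' $ i" for \<mu>' s' :: "real^'d"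
    unfolding b0 bw[OF that(2)]
    by (rule sum_mono, rule K_min(1)) (use s that in auto)
  have part1: "is_proj_Astar Cset ?w ?P0"
    unfolding is_proj_Astar_def
  proof (intro conjI ballI)
    show "?P0 \<in> Cset" by (rule P0C)
    fix w :: "(real^'d) \<times> (real^'d)" assume "w \<in> Cset"
    then obtain \<mu>' s' where w: "w = exp_param \<mu>' s'" "\<forall>i. 0 \<le> \<mu>' $ i" "\<forall>i. 0 < s' $ i"
      unfolding Cset_def by blast
    show "bregman_Astar ?P0 ?w \<le> bregman_Astar w ?w" unfolding w(1) by (rule le[OF w(2,3)])
  qed
  have part2: "p = ?P0" if pp: "is_proj_Astar Cset ?w p" for p
  proof -
    from pp have pC: "p \<in> Cset" and pmin: "bregman_Astar p ?w \<le> bregman_Astar ?P0 ?w"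
      unfolding is_proj_Astar_def using P0C by auto
    from pC obtain \<mu>' s' where p: "p = exp_param \<mu>' s'" "\<forall>i. 0 \<le> \<mu>' $ i" "\<forall>i. 0 < s' $ i"
      unfolding Cset_def by blast
    let ?D = "\<lambda>i. K (s $ i) (\<mu> $ i) (s' $ i) (\<mu>' $ i) - K (s $ i) (\<mu> $ i) (s $ i) (max 0 (\<mu> $ i))"
    have nn: "0 \<le> ?D i" for i using K_min(1)[of "s $ i" "s' $ i" "\<mu>' $ i" "\<mu> $ i"] s p by auto
    have "sum ?D UNIV \<le> 0"
      using pmin unfolding p(1) bw[OF p(3)] b0 by (simp add: sum_subtractf)
    moreover have "0 \<le> sum ?D UNIV" by (rule sum_nonneg) (rule nn)
    ultimately have "sum ?D UNIV = 0" by simp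
    hence "\<forall>i\<in>UNIV. ?D i = 0" using sum_nonneg_eq_0_iff[of UNIV ?D] nn by simp
    hence "s' $ i = s $ i \<and> \<mu>' $ i = max 0 (\<mu> $ i)" for i
      using K_min(2)[of "s $ i" "s' $ i" "\<mu>' $ i" "\<mu> $ i"] s p by auto
    hence "s' = s" "\<mu>' = ?mP" by (simp_all add: vec_eq_iff)
    thus ?thesis using p(1) by simp
  qed
  show ?thesis using part1 part2 by blast
qed

end
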